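(* There exist universal constants $C,C'>0$ such that the following holds. For every $m>0$, every $\alpha,\beta\in(0,1/3)$, every $\epsilon\in(0,1)$ and every odd $n\in\mathbb{N}$ with $n\epsilon\ge C\ln(1/(\alpha\beta))$, and every $D\in\mathcal{CTM}$, with probability at least $1-\beta$, $$p_\alpha(D,\mathtt{DPExpMed}_\alpha(D))\le \frac{C'}{\epsilon}\max\left[1,\ln\frac{1}{\alpha\beta n\epsilon}\right].$$
   Context: $V=[-m/2,m/2]$. A dataset is $D=(x_1,\dots,x_n)\in V^n$, indexed so that $x_1\le\dots\le x_n$, with median $\mathcal{T}(D)=x_{\lceil n/2\rceil}$. $\mathcal{CTM}$ is the set of datasets with $|x_{i+1}-x_i|\ge|x_{j+1}-x_j|$ for all $1\le i<j\le\lceil n/2\rceil-1$ and $|x_i-x_{i-1}|\ge|x_j-x_{j-1}|$ for all $\lceil n/2\rceil+1\le j<i\le n$. The percentile loss $q(D,a)$ for $a\in V$ is: $\min\{|\lceil n/2\rceil-i|: a\in[x_i,\mathcal{T}(D)]\}$ if $a\in[x_1,\mathcal{T}(D)]$; $\min\{|\lceil n/2\rceil-i|: a\in[\mathcal{T}(D),x_i]\}$ if $a\in(\mathcal{T}(D),x_n]$; $\lceil n/2\rceil$ otherwise. The widened loss is $p_\alpha(D,\ell)=\min_{a\in V:|a-\ell|\le\alpha m}q(D,a)$. $\mathtt{DPExpMed}_\alpha(D)$ is the random point of $V$ with density proportional to $\exp(-\frac{\epsilon}{2}p_\alpha(D,\ell))$. *)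

theory Defs
  imports "HOL-Analysis.Analysis"
begin

definition Vdom :: "real \<Rightarrow> real set" where
  "Vdom m = {-m/2..m/2}"

text \<open>A dataset of size n is represented by x :: nat => real, with entries x 1, ..., x n.
  It is a valid (sorted) dataset in V^n if all entries lie in V and x 1 <= ... <= x n.\<close>
definition sorted_dataset :: "real \<Rightarrow> nat \<Rightarrow> (nat \<Rightarrow> real) \<Rightarrow> bool" where
  "sorted_dataset m n x \<longleftrightarrow> (\<forall>i\<in>{1..n}. x i \<in> Vdom m) \<and> (\<forall>i j. 1 \<le> i \<longrightarrow> i \<le> j \<longrightarrow> j \<le> n \<longrightarrow> x i \<le> x j)"

definition med_idx :: "nat \<Rightarrow> nat" where
  "med_idx n = nat \<lceil>real n / 2\<rceil>"

definition median :: "nat \<Rightarrow> (nat \<Rightarrow> real) \<Rightarrow> real" where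
  "median n x = x (med_idx n)"

definition CTM :: "nat \<Rightarrow> (nat \<Rightarrow> real) \<Rightarrow> bool" where
  "CTM n x \<longleftrightarrow>
     (\<forall>i j. 1 \<le> i \<longrightarrow> i < j \<longrightarrow> j \<le> med_idx n - 1 \<longrightarrow> \<bar>x (i+1) - x i\<bar> \<ge> \<bar>x (j+1) - x j\<bar>) \<and>
     (\<forall>i j. med_idx n + 1 \<le> j \<longrightarrow> j < i \<longrightarrow> i \<le> n \<longrightarrow> \<bar>x i - x (i-1)\<bar> \<ge> \<bar>x j - x (j-1)\<bar>)"

definition qloss :: "nat \<Rightarrow> (nat \<Rightarrow> real) \<Rightarrow> real \<Rightarrow> nat" where
  "qloss n x a =
     (if x 1 \<le> a \<and> a \<le> median n x then
        Min {nat \<bar>int (med_idx n) - int i\<bar> | i. i \<in> {1..n} \<and> x i \<le> a \<and> a \<le> median n x}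
      else if median n x < a \<and> a \<le> x n then
        Min {nat \<bar>int (med_idx n) - int i\<bar> | i. i \<in> {1..n} \<and> median n x \<le> a \<and> a \<le> x i}
      else med_idx n)"

definition ploss :: "real \<Rightarrow> real \<Rightarrow> nat \<Rightarrow> (nat \<Rightarrow> real) \<Rightarrow> real \<Rightarrow> real" where
  "ploss m \<alpha> n x l = real (Inf {qloss n x a | a. a \<in> Vdom m \<and> \<bar>a - l\<bar> \<le> \<alpha> * m})"

definition dp_weight :: "real \<Rightarrow> real \<Rightarrow> real \<Rightarrow> nat \<Rightarrow> (nat \<Rightarrow> real) \<Rightarrow> real \<Rightarrow> real" where
  "dp_weight m \<alpha> \<epsilon> n x l = exp (- (\<epsilon> / 2) * ploss m \<alpha> n x l)"

definition DPExpMed_prob :: "real \<Rightarrow> real \<Rightarrow> real \<Rightarrow> nat \<Rightarrow> (nat \<Rightarrow> real) \<Rightarrow> real set \<Rightarrow> real" where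
  "DPExpMed_prob m \<alpha> \<epsilon> n x S =
     (LINT l:(S \<inter> Vdom m)|lborel. dp_weight m \<alpha> \<epsilon> n x l) /
     (LINT l:Vdom m|lborel. dp_weight m \<alpha> \<epsilon> n x l)"

end

theory Submission imports Defs begin

lemma exp_int1:
  fixes c a b :: real assumes c: "c > 0"
  shows "integrable lborel (\<lambda>l. indicator {a..b} l *\<^sub>R exp (- c * (l - a)))"
    and "integral\<^sup>L lborel (\<lambda>l. indicator {a..b} l *\<^sub>R exp (- c * (l - a))) \<le> 1 / c"
proof -
  show "integrable lborel (\<lambda>l. indicator {a..b} l *\<^sub>R exp (- c * (l - a)))"
  proof -
    have "continuous_on {a..b} (\<lambda>l. exp (- c * (l - a)))" by (intro continuous_intros)
    from borel_integrable_atLeastAtMost'[OF this] show ?thesis unfolding set_integrable_def .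
  qed
  show "integral\<^sup>L lborel (\<lambda>l. indicator {a..b} l *\<^sub>R exp (- c * (l - a))) \<le> 1 / c"
  proof (cases "a \<le> b")
    case False
    then show ?thesis using c by simp
  next
    case True
    have "integral\<^sup>L lborel (\<lambda>l. indicator {a..b} l *\<^sub>R exp (- c * (l - a))) =
       (- exp (- c * (b - a)) / c) - (- exp (- c * (a - a)) / c)"
    proof (rule integral_FTC_atLeastAtMost[OF True])
      fix l assume "a \<le> l" "l \<le> b"
      show "((\<lambda>l. - exp (- c * (l - a)) / c) has_vector_derivative exp (- c * (l - a))) (at l within {a..b})"
        using c by (auto intro!: derivative_eq_intros simp: has_real_derivative_iff_has_vector_derivative[symmetric])
    next
      show "continuous_on {a..b} (\<lambda>l. exp (- c * (l - a)))" by (auto intro!: continuous_intros)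
    qed
    also have "\<dots> \<le> 1 / c" using c by (simp add: field_simps)
    finally show ?thesis .
  qed
qed

lemma exp_int2:
  fixes c a b :: real assumes c: "c > 0"
  shows "integrable lborel (\<lambda>l. indicator {a..b} l *\<^sub>R exp (- c * (b - l)))"
    and "integral\<^sup>L lborel (\<lambda>l. indicator {a..b} l *\<^sub>R exp (- c * (b - l))) \<le> 1 / c"
proof -
  show "integrable lborel (\<lambda>l. indicator {a..b} l *\<^sub>R exp (- c * (b - l)))"
  proof -
    have "continuous_on {a..b} (\<lambda>l. exp (- c * (b - l)))" by (intro continuous_intros)
    from borel_integrable_atLeastAtMost'[OF this] show ?thesis unfolding set_integrable_def .
  qed
  show "integral\<^sup>L lborel (\<lambda>l. indicator {a..b} l *\<^sub>R exp (- c * (b - l))) \<le> 1 / c"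
  proof (cases "a \<le> b")
    case False
    then show ?thesis using c by simp
  next
    case True
    have "integral\<^sup>L lborel (\<lambda>l. indicator {a..b} l *\<^sub>R exp (- c * (b - l))) =
       (exp (- c * (b - b)) / c) - (exp (- c * (b - a)) / c)"
    proof (rule integral_FTC_atLeastAtMost[OF True])
      fix l assume "a \<le> l" "l \<le> b"
      show "((\<lambda>l. exp (- c * (b - l)) / c) has_vector_derivative exp (- c * (b - l))) (at l within {a..b})"
        using c by (auto intro!: derivative_eq_intros simp: has_real_derivative_iff_has_vector_derivative[symmetric])
    next
      show "continuous_on {a..b} (\<lambda>l. exp (- c * (b - l)))" by (auto intro!: continuous_intros)
    qed
    also have "\<dots> \<le> 1 / c" using c by (simp add: field_simps)
    finally show ?thesis .
  qed
qed


context
  fixes m :: real and n :: nat and x :: "nat \<Rightarrow> real"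
  assumes sd: "sorted_dataset m n x" and ctm: "CTM n x" and od: "odd n" and mpos: "m > 0"
begin

lemma M_eq: "2 * med_idx n = n + 1"
proof -
  obtain k where "n = 2*k+1" using od oddE by blast
  then have "real n / 2 = real k + 1/2" by simp
  then have "\<lceil>real n / 2\<rceil> = int k + 1" by linarith
  then show ?thesis unfolding med_idx_def using \<open>n = 2*k+1\<close> by simp
qed

lemma M_ge1: "med_idx n \<ge> 1" using M_eq by linarith
lemma M_len: "med_idx n \<le> n" using M_eq by linarith

lemma xmono: "1 \<le> i \<Longrightarrow> i \<le> j \<Longrightarrow> j \<le> n \<Longrightarrow> x i \<le> x j"
  using sd unfolding sorted_dataset_def by blast

lemma xin: "1 \<le> i \<Longrightarrow> i \<le> n \<Longrightarrow> -m/2 \<le> x i \<and> x i \<le> m/2"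
  using sd unfolding sorted_dataset_def Vdom_def by auto

lemma gapL: "1 \<le> i \<Longrightarrow> i < j \<Longrightarrow> j \<le> med_idx n - 1 \<Longrightarrow> x (j+1) - x j \<le> x (i+1) - x i"
proof -
  assume a: "1 \<le> i" "i < j" "j \<le> med_idx n - 1"
  have "\<bar>x (i+1) - x i\<bar> \<ge> \<bar>x (j+1) - x j\<bar>" using ctm a unfolding CTM_def by blast
  moreover have "x i \<le> x (i+1)" "x j \<le> x (j+1)" using a M_len by (auto intro!: xmono)
  ultimately show ?thesis by linarith
qed

lemma gapR: "med_idx n + 1 \<le> j \<Longrightarrow> j < i \<Longrightarrow> i \<le> n \<Longrightarrow> x j - x (j-1) \<le> x i - x (i-1)"
proof -
  assume a: "med_idx n + 1 \<le> j" "j < i" "i \<le> n"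
  have "\<bar>x i - x (i-1)\<bar> \<ge> \<bar>x j - x (j-1)\<bar>" using ctm a unfolding CTM_def by blast
  moreover have "x (i-1) \<le> x i" "x (j-1) \<le> x j" using a M_ge1 by (auto intro!: xmono)
  ultimately show ?thesis by linarith
qed

lemma G1: "1 \<le> i \<Longrightarrow> i + k \<le> med_idx n \<Longrightarrow> x (i+k) - x i \<le> real k * (x (i+1) - x i)"
proof (induction k)
  case 0 then show ?case by simp
next
  case (Suc k)
  have IH: "x (i+k) - x i \<le> real k * (x (i+1) - x i)" using Suc by simp
  have "x (i+k+1) - x (i+k) \<le> x (i+1) - x i"
  proof (cases "k = 0")
    case True then show ?thesis by simp
  next
    case False then show ?thesis using gapL[of i "i+k"] Suc.prems by simp
  qed
  then show ?case using IH by (simp add: algebra_simps)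
qed

lemma G2: "k \<le> i \<Longrightarrow> i \<le> med_idx n - 1 \<Longrightarrow> real k * (x (i+1) - x i) \<le> x (i+1) - x (i+1-k)"
proof (induction k)
  case 0 then show ?case by simp
next
  case (Suc k)
  have IH: "real k * (x (i+1) - x i) \<le> x (i+1) - x (i+1-k)" using Suc by simp
  have "x (i+1) - x i \<le> x (i+1-k) - x (i-k)"
  proof (cases "k = 0")
    case True then show ?thesis by simp
  next
    case False
    have "x (i-k+1) - x (i-k) \<le> x (i - k + 1) - x (i-k)" by simp
    have "x (i+1) - x i \<le> x (i-k+1) - x (i-k)" using gapL[of "i-k" i] Suc.prems False by simp
    moreover have "i-k+1 = i+1-k" using Suc.prems by simp
    ultimately show ?thesis by simp
  qed
  moreover have "i + 1 - Suc k = i - k" by simp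
  ultimately show ?case using IH by (simp add: algebra_simps)
qed

lemma G3: "med_idx n + 1 \<le> i \<Longrightarrow> i \<le> n \<Longrightarrow> k + med_idx n \<le> i \<Longrightarrow> x i - x (i-k) \<le> real k * (x i - x (i-1))"
proof (induction k)
  case 0 then show ?case by simp
next
  case (Suc k)
  have IH: "x i - x (i-k) \<le> real k * (x i - x (i-1))" using Suc.IH Suc.prems by linarith
  have "x (i-k) - x (i-k-1) \<le> x i - x (i-1)"
  proof (cases "k = 0")
    case True then show ?thesis by simp
  next
    case False
    have a: "med_idx n + 1 \<le> i-k" "i-k < i" using Suc.prems False by linarith+
    show ?thesis by (rule gapR[OF a \<open>i \<le> n\<close>])
  qed
  moreover have "x (i - Suc k) = x (i-k-1)" by (simp add: diff_diff_left)
  moreover have "real (Suc k) * (x i - x (i-1)) = real k * (x i - x (i-1)) + (x i - x (i-1))" by (simp add: algebra_simps)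
  ultimately show ?case using IH by linarith
qed

lemma G4: "med_idx n + 1 \<le> i \<Longrightarrow> i + k \<le> n + 1 \<Longrightarrow> real k * (x i - x (i-1)) \<le> x (i+k-1) - x (i-1)"
proof (induction k)
  case 0 then show ?case by simp
next
  case (Suc k)
  have IH: "real k * (x i - x (i-1)) \<le> x (i+k-1) - x (i-1)" using Suc.IH Suc.prems by linarith
  have "x i - x (i-1) \<le> x (i+k) - x (i+k-1)"
  proof (cases "k = 0")
    case True then show ?thesis by simp
  next
    case False
    have a: "med_idx n + 1 \<le> i" "i < i+k" "i+k \<le> n" using Suc.prems False by linarith+
    show ?thesis using gapR[OF a] .
  qed
  moreover have "i + Suc k - 1 = i + k" by simp
  ultimately show ?case using IH by (simp add: distrib_right)
qed


lemma finS: "finite {nat \<bar>int (med_idx n) - int i\<bar> | i. i \<in> {1..n} \<and> P i}"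
  by (rule finite_subset[of _ "(\<lambda>i. nat \<bar>int (med_idx n) - int i\<bar>) ` {1..n}"]) auto

lemma q_le_M: "qloss n x a \<le> med_idx n"
proof -
  have n1: "1 \<le> n" using M_ge1 M_len by linarith
  consider (c1) "x 1 \<le> a \<and> a \<le> median n x" | (c2) "\<not>(x 1 \<le> a \<and> a \<le> median n x)" "median n x < a \<and> a \<le> x n"
    | (c3) "\<not>(x 1 \<le> a \<and> a \<le> median n x)" "\<not>(median n x < a \<and> a \<le> x n)" by blast
  then show ?thesis
  proof cases
    case c1
    have "nat \<bar>int (med_idx n) - int 1\<bar> \<in> {nat \<bar>int (med_idx n) - int i\<bar> | i. i \<in> {1..n} \<and> x i \<le> a \<and> a \<le> median n x}"
      using c1 n1 by (auto intro!: exI[of _ "1::nat"])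
    then have "Min {nat \<bar>int (med_idx n) - int i\<bar> | i. i \<in> {1..n} \<and> x i \<le> a \<and> a \<le> median n x} \<le> nat \<bar>int (med_idx n) - int 1\<bar>"
      by (intro Min_le finS)
    then show ?thesis using c1 M_ge1 unfolding qloss_def by simp
  next
    case c2
    have "nat \<bar>int (med_idx n) - int n\<bar> \<in> {nat \<bar>int (med_idx n) - int i\<bar> | i. i \<in> {1..n} \<and> median n x \<le> a \<and> a \<le> x i}"
      using c2 n1 by (auto intro!: exI[of _ "n"])
    then have "Min {nat \<bar>int (med_idx n) - int i\<bar> | i. i \<in> {1..n} \<and> median n x \<le> a \<and> a \<le> x i} \<le> nat \<bar>int (med_idx n) - int n\<bar>"
      by (intro Min_le finS)
    moreover have "nat \<bar>int (med_idx n) - int n\<bar> \<le> med_idx n" using M_eq M_len by linarith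
    ultimately show ?thesis using c2 unfolding qloss_def by simp
  next
    case c3 then show ?thesis unfolding qloss_def by (simp only: if_not_P[OF c3(1)] if_not_P[OF c3(2)] if_False order_refl)
  qed
qed

lemma q_med: "qloss n x (median n x) = 0"
proof -
  have x1: "x 1 \<le> median n x" unfolding median_def using M_ge1 M_len by (intro xmono) auto
  have "nat \<bar>int (med_idx n) - int (med_idx n)\<bar> \<in> {nat \<bar>int (med_idx n) - int i\<bar> | i. i \<in> {1..n} \<and> x i \<le> median n x \<and> median n x \<le> median n x}"
    using M_ge1 M_len unfolding median_def by auto
  then have "Min {nat \<bar>int (med_idx n) - int i\<bar> | i. i \<in> {1..n} \<and> x i \<le> median n x \<and> median n x \<le> median n x} \<le> 0"
    using Min_le[OF finS] by fastforce
  then show ?thesis using x1 unfolding qloss_def by simp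
qed

lemma q_mono_left: "a \<le> a' \<Longrightarrow> a' \<le> median n x \<Longrightarrow> qloss n x a' \<le> qloss n x a"
proof -
  assume a: "a \<le> a'" "a' \<le> median n x"
  show ?thesis
  proof (cases "x 1 \<le> a")
    case False
    then have "qloss n x a = med_idx n"
      unfolding qloss_def using a by auto
    then show ?thesis using q_le_M by simp
  next
    case True
    let ?S = "\<lambda>b. {nat \<bar>int (med_idx n) - int i\<bar> | i. i \<in> {1..n} \<and> x i \<le> b \<and> b \<le> median n x}"
    have q1: "qloss n x a = Min (?S a)" using True a unfolding qloss_def by simp
    have q2: "qloss n x a' = Min (?S a')" using True a unfolding qloss_def by simp
    have sub: "?S a \<subseteq> ?S a'" using a by fastforce
    have ne: "?S a \<noteq> {}" using True a M_ge1 M_len by fastforce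
    show ?thesis unfolding q1 q2 by (rule Min_antimono[OF sub ne finS])
  qed
qed

lemma q_mono_right: "median n x \<le> a \<Longrightarrow> a \<le> a' \<Longrightarrow> qloss n x a \<le> qloss n x a'"
proof -
  assume a: "median n x \<le> a" "a \<le> a'"
  show ?thesis
  proof (cases "a = median n x")
    case True then show ?thesis using q_med by simp
  next
    case False
    then have lt: "median n x < a" using a by simp
    show ?thesis
    proof (cases "a' \<le> x n")
      case False
      have x1: "x 1 \<le> median n x" unfolding median_def using M_ge1 M_len by (intro xmono) auto
      have "qloss n x a' = med_idx n" unfolding qloss_def using False lt a x1 by auto
      then show ?thesis using q_le_M by simp
    next
      case True
      let ?S = "\<lambda>b. {nat \<bar>int (med_idx n) - int i\<bar> | i. i \<in> {1..n} \<and> median n x \<le> b \<and> b \<le> x i}"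
      have q1: "qloss n x a = Min (?S a)" using True a lt unfolding qloss_def by simp
      have q2: "qloss n x a' = Min (?S a')" using True a lt unfolding qloss_def by simp
      have sub: "?S a' \<subseteq> ?S a" using a by fastforce
      have ne: "?S a' \<noteq> {}" using True a M_ge1 M_len by fastforce
      show ?thesis unfolding q1 q2 by (rule Min_antimono[OF sub ne finS])
    qed
  qed
qed


lemma q_lower: "min (real (med_idx n) / 2) (\<bar>a - median n x\<bar> * real (med_idx n) / (2*m)) \<le> real (qloss n x a)"
proof -
  define M where "M = med_idx n"
  have M1: "1 \<le> M" and Mn: "M \<le> n" and M2: "2*M = n+1" using M_ge1 M_len M_eq by (auto simp: M_def)
  have x0: "median n x = x M" by (simp add: median_def M_def)
  let ?B = "min (real M / 2) (\<bar>a - x M\<bar> * real M / (2*m))"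
  have Bhalf: "?B \<le> real M / 2" by simp
  have x1: "x 1 \<le> x M" using M1 Mn by (intro xmono) auto
  consider (c1) "x 1 \<le> a \<and> a \<le> x M" | (c2) "\<not>(x 1 \<le> a \<and> a \<le> x M)" "x M < a \<and> a \<le> x n"
    | (c3) "\<not>(x 1 \<le> a \<and> a \<le> x M)" "\<not>(x M < a \<and> a \<le> x n)" by blast
  then show ?thesis
  proof cases
    case c1
    let ?S = "{nat \<bar>int (med_idx n) - int i\<bar> | i. i \<in> {1..n} \<and> x i \<le> a \<and> a \<le> median n x}"
    have q: "qloss n x a = Min ?S" using c1 x0 unfolding qloss_def by simp
    have ne: "?S \<noteq> {}" using c1 M1 Mn x0 by (auto intro!: exI[of _ "1::nat"])
    have "Min ?S \<in> ?S" by (rule Min_in[OF finS ne])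
    then obtain i where i: "1 \<le> i" "i \<le> n" "x i \<le> a" and qi: "qloss n x a = nat \<bar>int M - int i\<bar>"
      unfolding q M_def by auto
    show ?thesis
    proof (cases "M \<le> i")
      case True
      have "x M \<le> x i" using True i M1 by (intro xmono) auto
      then have "a = x M" using c1 i by linarith
      then show ?thesis using x0 by (simp add: min_def)
    next
      case False
      have qi': "real (qloss n x a) = real M - real i" using qi False by simp
      define g where "g = x (i+1) - x i"
      have g0: "0 \<le> g" unfolding g_def using xmono[of i "i+1"] i False Mn by auto
      have "x (i + (M-i)) - x i \<le> real (M-i) * g" unfolding g_def using i False by (intro G1) (auto simp: M_def)
      then have d1: "x M - a \<le> (real M - real i) * g" using False i by (simp add: of_nat_diff)
      have "real i * g \<le> x (i+1) - x (i+1-i)" unfolding g_def using i False by (intro G2) (auto simp: M_def)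
      moreover have "x (i+1) \<le> m/2" "-m/2 \<le> x 1" using xin[of "i+1"] xin[of 1] i False Mn by auto
      ultimately have d2: "real i * g \<le> m" by simp
      have d0: "0 \<le> x M - a" using c1 by simp
      show ?thesis
      proof (cases "M \<le> 2*i")
        case True
        have "(x M - a) * real M \<le> (x M - a) * (2 * real i)" using True d0
          by (intro mult_left_mono) auto
        also have "\<dots> = 2 * ((x M - a) * real i)" by simp
        also have "(x M - a) * real i \<le> ((real M - real i) * g) * real i" using d1 i by (intro mult_right_mono) auto
        also have "\<dots> = (real M - real i) * (real i * g)" by simp
        also have "\<dots> \<le> (real M - real i) * m" using d2 False by (intro mult_left_mono) auto
        finally have "(x M - a) * real M \<le> 2 * ((real M - real i) * m)" by simp
        then have "(x M - a) * real M / (2*m) \<le> real M - real i" using mpos by (simp add: field_simps)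
        moreover have "\<bar>a - x M\<bar> = x M - a" using d0 by simp
        ultimately show ?thesis using qi' x0 by (simp add: M_def[symmetric] min_le_iff_disj)
      next
        case False
        then have "real M / 2 \<le> real M - real i" by simp
        then show ?thesis using qi' x0 by (simp add: M_def[symmetric] min_le_iff_disj)
      qed
    qed
  next
    case c2
    let ?S = "{nat \<bar>int (med_idx n) - int i\<bar> | i. i \<in> {1..n} \<and> median n x \<le> a \<and> a \<le> x i}"
    have q: "qloss n x a = Min ?S" using c2 x0 unfolding qloss_def by simp
    have ne: "?S \<noteq> {}" using c2 M1 Mn x0 by (auto intro!: exI[of _ n])
    have "Min ?S \<in> ?S" by (rule Min_in[OF finS ne])
    then obtain i where i: "1 \<le> i" "i \<le> n" "a \<le> x i" and qi: "qloss n x a = nat \<bar>int M - int i\<bar>"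
      unfolding q M_def by auto
    have iM: "M < i"
    proof (rule ccontr)
      assume "\<not> M < i"
      then have "x i \<le> x M" using i Mn by (intro xmono) auto
      then show False using c2 i by linarith
    qed
    have qi': "real (qloss n x a) = real i - real M" using qi iM by simp
    define g where "g = x i - x (i-1)"
    have g0: "0 \<le> g" unfolding g_def using xmono[of "i-1" i] i iM M1 by auto
    have "x i - x (i - (i-M)) \<le> real (i-M) * g" unfolding g_def using i iM by (intro G3) (auto simp: M_def)
    then have d1: "a - x M \<le> (real i - real M) * g" using iM i by (simp add: of_nat_diff)
    have "real (n+1-i) * g \<le> x (i + (n+1-i) - 1) - x (i-1)" unfolding g_def using i iM by (intro G4) (auto simp: M_def)
    moreover have "x n \<le> m/2" "-m/2 \<le> x (i-1)" using xin[of n] xin[of "i-1"] i iM M1 by auto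
    moreover have "real (n+1-i) = 2 * real M - real i" using M2 i by (simp add: of_nat_diff)
    ultimately have d2: "(2 * real M - real i) * g \<le> m" using i by simp
    have d0: "0 \<le> a - x M" using c2 by simp
    show ?thesis
    proof (cases "2 * (i - M) \<le> M")
      case True
      then have "2*i \<le> 3*M" using iM by linarith
      then have "real (2*i) \<le> real (3*M)" by (simp only: of_nat_le_iff)
      then have T: "real M \<le> 2 * (2 * real M - real i)" by simp
      have "(a - x M) * real M \<le> (a - x M) * (2 * (2 * real M - real i))" using T d0
        by (intro mult_left_mono) auto
      also have "\<dots> = 2 * ((a - x M) * (2 * real M - real i))" by simp
      also have "(a - x M) * (2 * real M - real i) \<le> ((real i - real M) * g) * (2 * real M - real i)"
        using d1 i M2 by (intro mult_right_mono) auto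
      also have "\<dots> = (real i - real M) * ((2 * real M - real i) * g)" by simp
      also have "\<dots> \<le> (real i - real M) * m" using d2 iM by (intro mult_left_mono) auto
      finally have "(a - x M) * real M \<le> 2 * ((real i - real M) * m)" by simp
      then have "(a - x M) * real M / (2*m) \<le> real i - real M" using mpos by (simp add: field_simps)
      moreover have "\<bar>a - x M\<bar> = a - x M" using d0 by simp
      ultimately show ?thesis using qi' x0 by (simp add: M_def[symmetric] min_le_iff_disj)
    next
      case False
      then have "3*M < 2*i" using iM by linarith
      then have "real (3*M) < real (2*i)" by (simp only: of_nat_less_iff)
      then have "real M / 2 \<le> real i - real M" by simp
      then show ?thesis using qi' x0 by (simp add: M_def[symmetric] min_le_iff_disj)
    qed
  next
    case c3
    have "qloss n x a = med_idx n" unfolding qloss_def x0 M_def[symmetric]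
      by (simp only: if_not_P[OF c3(1)] if_not_P[OF c3(2)] if_False)
    then show ?thesis using Bhalf x0 M_def by simp
  qed
qed


lemma med_in: "median n x \<in> Vdom m"
  using xin[of "med_idx n"] M_ge1 M_len unfolding median_def Vdom_def by auto

lemma p_le: "a \<in> Vdom m \<Longrightarrow> \<bar>a - l\<bar> \<le> al * m \<Longrightarrow> ploss m al n x l \<le> real (qloss n x a)"
proof -
  assume a: "a \<in> Vdom m" "\<bar>a - l\<bar> \<le> al * m"
  have "qloss n x a \<in> {qloss n x a | a. a \<in> Vdom m \<and> \<bar>a - l\<bar> \<le> al * m}" using a by blast
  then have "Inf {qloss n x a | a. a \<in> Vdom m \<and> \<bar>a - l\<bar> \<le> al * m} \<le> qloss n x a"
    unfolding Inf_nat_def by (rule Least_le)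
  then show ?thesis unfolding ploss_def by simp
qed

lemma p_att: "l \<in> Vdom m \<Longrightarrow> 0 \<le> al \<Longrightarrow> \<exists>a. a \<in> Vdom m \<and> \<bar>a - l\<bar> \<le> al * m \<and> ploss m al n x l = real (qloss n x a)"
proof -
  assume l: "l \<in> Vdom m" "0 \<le> al"
  let ?W = "{qloss n x a | a. a \<in> Vdom m \<and> \<bar>a - l\<bar> \<le> al * m}"
  have "?W \<noteq> {}" using l mpos by (auto intro!: exI[of _ l])
  then have "Inf ?W \<in> ?W" by (rule Inf_nat_def1)
  then show ?thesis unfolding ploss_def by auto
qed

lemma p_zero: "l \<in> Vdom m \<Longrightarrow> \<bar>l - median n x\<bar> \<le> al * m \<Longrightarrow> ploss m al n x l = 0"
proof -
  assume l: "l \<in> Vdom m" "\<bar>l - median n x\<bar> \<le> al * m"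
  have "ploss m al n x l \<le> 0" using p_le[OF med_in, of l al] l q_med by simp
  moreover have "0 \<le> ploss m al n x l" unfolding ploss_def by simp
  ultimately show ?thesis by simp
qed

lemma p_lower: "l \<in> Vdom m \<Longrightarrow> 0 \<le> al \<Longrightarrow>
  min (real (med_idx n) / 2) ((\<bar>l - median n x\<bar> - al * m) * real (med_idx n) / (2*m)) \<le> ploss m al n x l"
proof -
  assume l: "l \<in> Vdom m" "0 \<le> al"
  obtain a where a: "a \<in> Vdom m" "\<bar>a - l\<bar> \<le> al * m" "ploss m al n x l = real (qloss n x a)"
    using p_att[OF l] by blast
  have "\<bar>l - median n x\<bar> - al * m \<le> \<bar>a - median n x\<bar>" using a(2) by linarith
  then have "(\<bar>l - median n x\<bar> - al * m) * real (med_idx n) / (2*m) \<le> \<bar>a - median n x\<bar> * real (med_idx n) / (2*m)"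
    using mpos by (intro divide_right_mono mult_right_mono) auto
  then show ?thesis using q_lower[of a] a(3) by linarith
qed

lemma p_mono_left: "l \<in> Vdom m \<Longrightarrow> l' \<in> Vdom m \<Longrightarrow> 0 \<le> al \<Longrightarrow> l \<le> l' \<Longrightarrow> l' \<le> median n x \<Longrightarrow>
   ploss m al n x l' \<le> ploss m al n x l"
proof -
  assume l: "l \<in> Vdom m" "l' \<in> Vdom m" "0 \<le> al" "l \<le> l'" "l' \<le> median n x"
  obtain a where a: "a \<in> Vdom m" "\<bar>a - l\<bar> \<le> al * m" "ploss m al n x l = real (qloss n x a)"
    using p_att[OF l(1,3)] by blast
  show ?thesis
  proof (cases "l' - al * m \<le> a")
    case True
    have "\<bar>a - l'\<bar> \<le> al * m" using True a(2) l(4) by linarith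
    then show ?thesis using p_le[OF a(1)] a(3) by simp
  next
    case False
    let ?a = "l' - al * m"
    have am: "0 \<le> al * m" using l(3) mpos by simp
    have "?a \<in> Vdom m" using False a(1) l(2) am unfolding Vdom_def by auto
    moreover have "\<bar>?a - l'\<bar> \<le> al * m" using l(3) mpos by simp
    ultimately have "ploss m al n x l' \<le> real (qloss n x ?a)" by (rule p_le)
    also have "qloss n x ?a \<le> qloss n x a" using False l(5) am
      by (intro q_mono_left) auto
    finally show ?thesis using a(3) by simp
  qed
qed

lemma p_mono_right: "l \<in> Vdom m \<Longrightarrow> l' \<in> Vdom m \<Longrightarrow> 0 \<le> al \<Longrightarrow> l \<le> l' \<Longrightarrow> median n x \<le> l \<Longrightarrow>
   ploss m al n x l \<le> ploss m al n x l'"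
proof -
  assume l: "l \<in> Vdom m" "l' \<in> Vdom m" "0 \<le> al" "l \<le> l'" "median n x \<le> l"
  obtain a where a: "a \<in> Vdom m" "\<bar>a - l'\<bar> \<le> al * m" "ploss m al n x l' = real (qloss n x a)"
    using p_att[OF l(2,3)] by blast
  show ?thesis
  proof (cases "a \<le> l + al * m")
    case True
    have "\<bar>a - l\<bar> \<le> al * m" using True a(2) l(4) by linarith
    then show ?thesis using p_le[OF a(1)] a(3) by simp
  next
    case False
    let ?a = "l + al * m"
    have am: "0 \<le> al * m" using l(3) mpos by simp
    have "?a \<in> Vdom m" using False a(1) l(1) am unfolding Vdom_def by auto
    moreover have "\<bar>?a - l\<bar> \<le> al * m" using l(3) mpos by simp
    ultimately have "ploss m al n x l \<le> real (qloss n x ?a)" by (rule p_le)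
    also have "qloss n x ?a \<le> qloss n x a" using False l(5) am
      by (intro q_mono_right) auto
    finally show ?thesis using a(3) by simp
  qed
qed


lemma F_exists: "0 \<le> al \<Longrightarrow> \<exists>F. F \<in> borel_measurable borel \<and> (\<forall>l \<in> Vdom m. F l = ploss m al n x l)"
proof -
  assume al: "0 \<le> al"
  define c0 where "c0 = median n x"
  have c0V: "c0 \<in> Vdom m" using med_in c0_def by simp
  define PL where "PL l = ploss m al n x (max (-m/2) (min l c0))" for l
  define PR where "PR l = ploss m al n x (min (m/2) (max l c0))" for l
  have "mono (\<lambda>l. - PL l)"
  proof (rule monoI)
    fix u v :: real assume "u \<le> v"
    have "ploss m al n x (max (-m/2) (min v c0)) \<le> ploss m al n x (max (-m/2) (min u c0))"
      using c0V \<open>u \<le> v\<close> mpos al unfolding c0_def Vdom_def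
      by (intro p_mono_left) (auto simp: Vdom_def c0_def)
    then show "- PL u \<le> - PL v" unfolding PL_def by simp
  qed
  then have "(\<lambda>l. - PL l) \<in> borel_measurable borel" by (rule borel_measurable_mono)
  then have mL: "PL \<in> borel_measurable borel" using borel_measurable_uminus[of "\<lambda>l. - PL l"] by simp
  have "mono PR"
  proof (rule monoI)
    fix u v :: real assume "u \<le> v"
    show "PR u \<le> PR v" unfolding PR_def
      using c0V \<open>u \<le> v\<close> mpos al unfolding c0_def Vdom_def
      by (intro p_mono_right) (auto simp: Vdom_def c0_def)
  qed
  then have mR: "PR \<in> borel_measurable borel" by (rule borel_measurable_mono)
  define F where "F l = (if l \<le> c0 then PL l else PR l)" for l
  have "F \<in> borel_measurable borel" unfolding F_def using mL mR by measurable
  moreover have "\<forall>l \<in> Vdom m. F l = ploss m al n x l"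
  proof
    fix l assume "l \<in> Vdom m"
    then show "F l = ploss m al n x l" unfolding F_def PL_def PR_def using c0V
      by (auto simp: Vdom_def max_def min_def)
  qed
  ultimately show ?thesis by blast
qed


lemma main_bound:
  assumes al: "0 < al" "al \<le> 1" and ep: "0 < ep" and t: "0 < t"
  shows "1 - exp (- ep * real (med_idx n) / 8) / al - 16 * exp (- ep * t / 4) / (al * ep * real (med_idx n))
     \<le> DPExpMed_prob m al ep n x {l. ploss m al n x l \<le> t}"
proof -
  define M where "M = real (med_idx n)"
  have M1: "1 \<le> M" using M_ge1 M_def by simp
  define c0 where "c0 = median n x"
  have c0V: "-m/2 \<le> c0" "c0 \<le> m/2" using med_in c0_def Vdom_def by auto
  obtain F where Fm: "F \<in> borel_measurable borel" and Feq: "\<And>l. l \<in> Vdom m \<Longrightarrow> F l = ploss m al n x l"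
    using F_exists[of al] al by auto
  define G where "G l = exp (-(ep/2) * F l)" for l
  define V where "V = Vdom m"
  have V_eq: "V = {-m/2..m/2}" unfolding V_def Vdom_def by simp
  define S' where "S' = {l. F l \<le> t}"
  have Vs[measurable]: "V \<in> sets lborel" unfolding V_eq by simp
  have VsV: "Vdom m \<in> sets borel" using Vs V_def by simp
  have S's[measurable]: "S' \<in> sets lborel" unfolding S'_def using Fm by measurable
  have VB[measurable]: "V \<in> sets borel" "S' \<in> sets borel" using Vs S's by auto
  have SVs: "S' \<inter> Vdom m \<in> sets borel" using S's VsV by auto
  have Gm[measurable]: "G \<in> borel_measurable lborel" unfolding G_def using Fm by measurable
  have F0: "\<And>l. l \<in> V \<Longrightarrow> 0 \<le> F l" using Feq unfolding V_def ploss_def by simp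
  have G01: "\<And>l. l \<in> V \<Longrightarrow> 0 \<le> G l \<and> G l \<le> 1" unfolding G_def using F0 ep by auto
  have mV: "emeasure lborel V = ennreal m" unfolding V_eq using mpos by simp
  have setint: "set_integrable lborel A G" if A: "A \<in> sets lborel" "A \<subseteq> V" for A
    unfolding set_integrable_def
  proof (rule integrableI_bounded_set[where A=A and B=1])
    show "A \<in> sets lborel" by fact
    show "(\<lambda>l. indicator A l *\<^sub>R G l) \<in> borel_measurable lborel" using A by measurable
    have "emeasure lborel A \<le> emeasure lborel V" using A Vs by (intro emeasure_mono) auto
    then show "emeasure lborel A < \<infinity>" using mV by (simp add: le_less_trans)
    show "AE l in lborel. l \<in> A \<longrightarrow> norm (indicator A l *\<^sub>R G l) \<le> 1"
      using G01 A by (intro AE_I2) auto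
    show "AE l in lborel. l \<notin> A \<longrightarrow> indicator A l *\<^sub>R G l = 0" by (intro AE_I2) auto
  qed
  define D where "D = (LINT l:V|lborel. G l)"
  define Num where "Num = (LINT l:(S' \<inter> V)|lborel. G l)"
  define Bd where "Bd = (LINT l:(V - S')|lborel. G l)"
  have probeq: "DPExpMed_prob m al ep n x {l. ploss m al n x l \<le> t} = Num / D"
  proof -
    have e1: "{l. ploss m al n x l \<le> t} \<inter> Vdom m = S' \<inter> V" unfolding S'_def V_def using Feq by auto
    have "(LINT l:Vdom m|lborel. dp_weight m al ep n x l) = D" unfolding D_def V_def[symmetric]
      by (rule set_lebesgue_integral_cong) (auto simp: dp_weight_def G_def Feq V_def VsV SVs)
    moreover have "(LINT l:({l. ploss m al n x l \<le> t} \<inter> Vdom m)|lborel. dp_weight m al ep n x l) = Num"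
      unfolding Num_def e1
      by (rule set_lebesgue_integral_cong) (auto simp: dp_weight_def G_def Feq V_def VsV SVs)
    ultimately show ?thesis unfolding DPExpMed_prob_def by simp
  qed
  have split: "D = Num + Bd"
  proof -
    have "V = (S' \<inter> V) \<union> (V - S')" by auto
    then have "D = (LINT l:((S' \<inter> V) \<union> (V - S'))|lborel. G l)" unfolding D_def by simp
    also have "\<dots> = Num + Bd" unfolding Num_def Bd_def
      by (rule set_integral_Un) (auto intro!: setint simp: VB sets.Diff sets.Int)
    finally show ?thesis .
  qed
  define I where "I = {max (-m/2) (c0 - al*m) .. min (m/2) (c0 + al*m)}"
  have am: "0 < al * m" using al mpos by simp
  have IV: "I \<subseteq> V" unfolding I_def V_eq by (auto simp: min_def max_def split: if_splits)
  have Is[measurable]: "I \<in> sets lborel" "I \<in> sets borel" unfolding I_def by simp_all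
  have Dlow: "al * m \<le> D"
  proof -
    have Iint: "set_integrable lborel V (indicator I :: real \<Rightarrow> real)" unfolding set_integrable_def
    proof (rule integrableI_bounded_set[where A=V and B=1])
      show "V \<in> sets lborel" by fact
      show "(\<lambda>l. indicator V l *\<^sub>R (indicator I l :: real)) \<in> borel_measurable lborel"
        by measurable
      show "emeasure lborel V < \<infinity>" using mV by simp
      show "AE l in lborel. l \<in> V \<longrightarrow> norm (indicator V l *\<^sub>R (indicator I l :: real)) \<le> 1"
        by (intro AE_I2) (auto simp: indicator_def)
      show "AE l in lborel. l \<notin> V \<longrightarrow> indicator V l *\<^sub>R (indicator I l :: real) = 0" by (intro AE_I2) auto
    qed
    have "(LINT l:V|lborel. (indicator I l :: real)) \<le> D" unfolding D_def
    proof (rule set_integral_mono[OF Iint setint[OF Vs order_refl]])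
      fix l assume lV: "l \<in> V"
      show "indicator I l \<le> G l"
      proof (cases "l \<in> I")
        case True
        then have "\<bar>l - median n x\<bar> \<le> al * m" unfolding I_def c0_def by auto
        then have "F l = 0" using Feq p_zero lV V_def by simp
        then show ?thesis using True unfolding G_def by simp
      next
        case False then show ?thesis using G01[OF lV] by simp
      qed
    qed
    moreover have "(LINT l:V|lborel. (indicator I l :: real)) = measure lborel I"
    proof -
      have "(\<lambda>l. indicator V l *\<^sub>R (indicator I l :: real)) = indicator I" using IV
        by (auto simp: indicator_def fun_eq_iff)
      then show ?thesis unfolding set_lebesgue_integral_def by simp
    qed
    moreover have "al * m \<le> measure lborel I"
    proof -
      have le: "max (-m/2) (c0 - al*m) \<le> min (m/2) (c0 + al*m)" using c0V am mpos by (auto simp: max_def min_def)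
      have "measure lborel I = min (m/2) (c0 + al*m) - max (-m/2) (c0 - al*m)"
        unfolding I_def using le by simp
      moreover have "al * m \<le> min (m/2) (c0 + al*m) - max (-m/2) (c0 - al*m)"
        using c0V am al mpos by (auto simp: min_def max_def)
      ultimately show ?thesis by simp
    qed
    ultimately show ?thesis by simp
  qed
  define c where "c = ep * M / (8*m)"
  have c: "0 < c" unfolding c_def using ep M1 mpos by simp
  define a1 where "a1 = c0 + al*m"
  define a2 where "a2 = c0 - al*m"
  define E1 where "E1 l = indicator {a1..m/2} l *\<^sub>R exp (- c * (l - a1))" for l
  define E2 where "E2 l = indicator {-m/2..a2} l *\<^sub>R exp (- c * (a2 - l))" for l
  define H where "H l = exp (- ep * t / 4) * (exp (- ep * M / 8) * indicator V l + E1 l + E2 l)" for l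
  have E1i: "integrable lborel E1" and E1b: "integral\<^sup>L lborel E1 \<le> 1/c"
    unfolding E1_def using exp_int1[OF c] by auto
  have E2i: "integrable lborel E2" and E2b: "integral\<^sup>L lborel E2 \<le> 1/c"
    unfolding E2_def using exp_int2[OF c] by auto
  have Vi: "integrable lborel (indicator V :: real \<Rightarrow> real)"
    using mV by (intro integrable_real_indicator) auto
  have Hi: "integrable lborel H" unfolding H_def using E1i E2i Vi by auto
  have Hint: "integral\<^sup>L lborel H = exp (- ep * t / 4) * (exp (- ep * M / 8) * m + integral\<^sup>L lborel E1 + integral\<^sup>L lborel E2)"
  proof -
    have mV': "measure lborel V = m" unfolding V_eq using mpos by simp
    show ?thesis unfolding H_def using E1i E2i Vi mV' by simp
  qed
  have E0: "0 \<le> E1 l" "0 \<le> E2 l" for l unfolding E1_def E2_def by auto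
  have pw: "indicator (V - S') l *\<^sub>R G l \<le> H l" for l
  proof (cases "l \<in> V - S'")
    case False
    then show ?thesis unfolding H_def using E0[of l] by simp
  next
    case True
    then have lV: "l \<in> V" and Ft: "t < F l" unfolding S'_def by auto
    have FP: "F l = ploss m al n x l" using Feq lV V_def by simp
    have far: "al * m < \<bar>l - c0\<bar>"
    proof (rule ccontr)
      assume "\<not> al * m < \<bar>l - c0\<bar>"
      then have "ploss m al n x l = 0" using p_zero lV V_def c0_def by simp
      then show False using Ft FP t by simp
    qed
    define sd where "sd = \<bar>l - c0\<bar> - al * m"
    have sd0: "0 < sd" using far sd_def by simp
    define lb where "lb = min (M / 2) (sd * M / (2*m))"
    have lbF: "lb \<le> F l" using p_lower[of l al] lV V_def al FP unfolding lb_def sd_def M_def c0_def by simp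
    have "G l = exp (- ep * F l / 4) * exp (- ep * F l / 4)" unfolding G_def by (simp add: exp_add[symmetric])
    also have "\<dots> \<le> exp (- ep * t / 4) * exp (- ep * lb / 4)"
      using Ft lbF ep by (intro mult_mono) auto
    finally have G1: "G l \<le> exp (- ep * t / 4) * exp (- ep * lb / 4)" .
    have ecs: "exp (- ep * lb / 4) \<le> exp (- ep * M / 8) + exp (- c * sd)"
    proof (cases "M / 2 \<le> sd * M / (2*m)")
      case True
      then have "lb = M/2" unfolding lb_def by simp
      then have "exp (- ep * lb / 4) = exp (- ep * M / 8)" by simp
      then show ?thesis using exp_gt_zero[of "- c * sd"] by linarith
    next
      case False
      then have "lb = sd * M / (2*m)" unfolding lb_def by simp
      then have "ep * lb / 4 = c * sd" unfolding c_def using mpos by (simp add: field_simps)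
      then have "exp (- ep * lb / 4) = exp (- c * sd)" by simp
      then show ?thesis using exp_gt_zero[of "- ep * M / 8"] by linarith
    qed
    have Esum: "exp (- c * sd) = E1 l + E2 l"
    proof (cases "c0 < l")
      case True
      then have "sd = l - a1" unfolding sd_def a1_def by simp
      moreover have "l \<in> {a1..m/2}" using True far lV unfolding a1_def V_eq by auto
      moreover have "l \<notin> {-m/2..a2}" using True am unfolding a2_def by auto
      ultimately show ?thesis unfolding E1_def E2_def by simp
    next
      case False
      then have "sd = a2 - l" unfolding sd_def a2_def by simp
      moreover have "l \<in> {-m/2..a2}" using False far lV unfolding a2_def V_eq by auto
      moreover have "l \<notin> {a1..m/2}" using False am unfolding a1_def by auto
      ultimately show ?thesis unfolding E1_def E2_def by simp
    qed
    have "indicator (V - S') l *\<^sub>R G l = G l" using True by simp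
    also have "\<dots> \<le> exp (- ep * t / 4) * (exp (- ep * M / 8) + exp (- c * sd))"
      using G1 ecs by (meson exp_ge_zero mult_left_mono order_trans)
    also have "\<dots> = H l" unfolding H_def Esum using lV by simp
    finally show ?thesis .
  qed
  have "Bd \<le> integral\<^sup>L lborel H" unfolding Bd_def set_lebesgue_integral_def
    using setint[of "V - S'"] pw Hi unfolding set_integrable_def by (intro integral_mono) auto
  also have "\<dots> \<le> exp (- ep * t / 4) * (exp (- ep * M / 8) * m + 2 / c)"
    unfolding Hint using E1b E2b by (intro mult_left_mono) auto
  finally have Bdle: "Bd \<le> exp (- ep * t / 4) * (exp (- ep * M / 8) * m + 2 / c)" .
  define B0 where "B0 = exp (- ep * t / 4) * (exp (- ep * M / 8) * m + 2 / c)"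
  have B00: "0 \<le> B0" unfolding B0_def using c mpos by (intro mult_nonneg_nonneg add_nonneg_nonneg) auto
  have Dpos: "0 < D" using Dlow am by simp
  have "Num / D = 1 - Bd / D" using split Dpos by (simp add: field_simps)
  moreover have "Bd / D \<le> B0 / D" using Bdle Dpos unfolding B0_def by (simp add: divide_right_mono)
  moreover have "B0 / D \<le> B0 / (al * m)" using B00 Dlow am by (intro divide_left_mono) auto
  moreover have "B0 / (al * m) \<le> exp (- ep * M / 8) / al + 16 * exp (- ep * t / 4) / (al * ep * M)"
  proof -
    have et: "exp (- ep * t / 4) \<le> 1" using ep t by simp
    have "B0 / (al * m) = exp (- ep * t / 4) * exp (- ep * M / 8) / al + 16 * exp (- ep * t / 4) / (al * ep * M)"
      unfolding B0_def c_def using mpos al ep M1 by (simp add: field_simps)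
    moreover have "exp (- ep * t / 4) * exp (- ep * M / 8) / al \<le> exp (- ep * M / 8) / al"
      using et al by (intro divide_right_mono mult_left_le_one_le) auto
    ultimately show ?thesis by simp
  qed
  ultimately have "1 - exp (- ep * M / 8) / al - 16 * exp (- ep * t / 4) / (al * ep * M) \<le> Num / D" by linarith
  then show ?thesis unfolding probeq M_def by (simp add: mult.assoc)
qed

end


theorem theorem7p9:
  shows "\<exists>C C' :: real. C > 0 \<and> C' > 0 \<and>
    (\<forall>m \<alpha> \<beta> \<epsilon> :: real. \<forall>n :: nat. \<forall>x :: nat \<Rightarrow> real.
       m > 0 \<longrightarrow> 0 < \<alpha> \<longrightarrow> \<alpha> < 1/3 \<longrightarrow> 0 < \<beta> \<longrightarrow> \<beta> < 1/3 \<longrightarrow>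
       0 < \<epsilon> \<longrightarrow> \<epsilon> < 1 \<longrightarrow> odd n \<longrightarrow>
       real n * \<epsilon> \<ge> C * ln (1 / (\<alpha> * \<beta>)) \<longrightarrow>
       sorted_dataset m n x \<longrightarrow> CTM n x \<longrightarrow>
       DPExpMed_prob m \<alpha> \<epsilon> n x
         {l. ploss m \<alpha> n x l \<le> C' / \<epsilon> * max 1 (ln (1 / (\<alpha> * \<beta> * real n * \<epsilon>)))}
       \<ge> 1 - \<beta>)"
proof (intro exI[of _ 32] conjI allI impI)
  fix m \<alpha> \<beta> \<epsilon> :: real and n :: nat and x :: "nat \<Rightarrow> real"
  assume mpos: "m > 0" and a0: "0 < \<alpha>" and a1: "\<alpha> < 1/3" and b0: "0 < \<beta>" and b1: "\<beta> < 1/3"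
    and e0: "0 < \<epsilon>" and e1: "\<epsilon> < 1" and od: "odd n"
    and nC: "real n * \<epsilon> \<ge> 32 * ln (1 / (\<alpha> * \<beta>))"
    and sd: "sorted_dataset m n x" and ctm: "CTM n x"
  define L where "L = ln (1 / (\<alpha> * \<beta> * real n * \<epsilon>))"
  define t where "t = 32 / \<epsilon> * max 1 L"
  define M where "M = real (med_idx n)"
  have n1: "1 \<le> n" using od by (cases n) auto
  have M2: "2 * M = real n + 1" using M_eq[OF sd ctm od mpos] unfolding M_def
    by (metis of_nat_1 of_nat_add of_nat_mult of_nat_numeral)
  have M0: "0 < M" using M2 by simp
  have t0: "0 < t" unfolding t_def using e0 by simp
  have ab: "0 < \<alpha> * \<beta>" using a0 b0 by simp
  have ab9: "\<alpha> * \<beta> \<le> 1/9" using a0 a1 b0 b1 mult_mono[of \<alpha> "1/3" \<beta> "1/3"] by simp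
  define K where "K = ln (1 / (\<alpha> * \<beta>))"
  have K1: "1 \<le> K"
  proof -
    have "9 \<le> 1 / (\<alpha> * \<beta>)" using ab9 ab by (simp add: field_simps)
    then have "exp 1 \<le> 1 / (\<alpha> * \<beta>)" using exp_le by linarith
    then have "ln (exp 1) \<le> ln (1 / (\<alpha> * \<beta>))" using ab by (subst ln_le_cancel_iff) auto
    then show ?thesis unfolding K_def by simp
  qed
  have eK: "exp (- K) = \<alpha> * \<beta>" unfolding K_def using ab by (simp add: exp_minus)
  have T1: "exp (- \<epsilon> * M / 8) / \<alpha> \<le> \<beta> / 2"
  proof -
    have "\<epsilon> * real n / 16 \<le> \<epsilon> * M / 8" using M2 e0 by (simp add: field_simps)
    moreover have "2 * K \<le> \<epsilon> * real n / 16" using nC unfolding K_def by (simp add: field_simps)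
    ultimately have "K + ln 2 \<le> \<epsilon> * M / 8" using K1 ln_2_less_1 by linarith
    then have "exp (- \<epsilon> * M / 8) \<le> exp (- K - ln 2)" by simp
    also have "\<dots> = \<alpha> * \<beta> / 2" using eK by (simp add: exp_diff exp_minus field_simps)
    finally show ?thesis using a0 by (simp add: field_simps)
  qed
  have T2: "16 * exp (- \<epsilon> * t / 4) / (\<alpha> * \<epsilon> * M) \<le> \<beta> / 2"
  proof -
    have abne: "0 < \<alpha> * \<beta> * real n * \<epsilon>" using ab n1 e0 by simp
    have eL: "exp (- L) = \<alpha> * \<beta> * real n * \<epsilon>" unfolding L_def using abne by (simp add: exp_minus)
    have et: "\<epsilon> * t / 4 = 8 * max 1 L" unfolding t_def using e0 by simp
    have "6 + L \<le> 8 * max 1 L" by (simp add: max_def)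
    moreover have "6 * ln 2 \<le> (6::real)" using ln_2_less_1 by simp
    ultimately have "6 * ln 2 + L \<le> \<epsilon> * t / 4" using et by linarith
    then have "exp (- \<epsilon> * t / 4) \<le> exp (- (6 * ln 2) - L)" by simp
    also have "\<dots> = exp (- L) / 2 ^ 6"
    proof -
      have "exp (real 6 * ln 2) = exp (ln 2) ^ 6" by (rule exp_of_nat_mult)
      then have e6: "exp (6 * ln 2) = (2::real) ^ 6" by simp
      have "exp (- (6 * ln 2) - L) = exp (- L) / exp (6 * ln 2)"
        by (simp add: exp_diff exp_minus field_simps)
      then show ?thesis using e6 by simp
    qed
    also have "\<dots> = \<alpha> * \<beta> * real n * \<epsilon> / 64" using eL by simp
    also have "\<dots> \<le> \<alpha> * \<beta> * \<epsilon> * M / 32" using M2 a0 b0 e0 by (simp add: field_simps)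
    finally have "exp (- \<epsilon> * t / 4) \<le> \<alpha> * \<beta> * \<epsilon> * M / 32" .
    then show ?thesis using a0 e0 M0 by (simp add: field_simps)
  qed
  have "1 - exp (- \<epsilon> * M / 8) / \<alpha> - 16 * exp (- \<epsilon> * t / 4) / (\<alpha> * \<epsilon> * M)
     \<le> DPExpMed_prob m \<alpha> \<epsilon> n x {l. ploss m \<alpha> n x l \<le> t}"
    unfolding M_def using main_bound[OF sd ctm od mpos, of \<alpha> \<epsilon> t] a0 a1 e0 t0 by simp
  then show "1 - \<beta> \<le> DPExpMed_prob m \<alpha> \<epsilon> n x
         {l. ploss m \<alpha> n x l \<le> 32 / \<epsilon> * max 1 (ln (1 / (\<alpha> * \<beta> * real n * \<epsilon>)))}"
    using T1 T2 unfolding t_def L_def by linarith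
qed simp_all

end
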